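(* For any random vector $\vec{x}=(\vec{x}(0),\dots,\vec{x}(k-1))$ of real random variables with finite expectations (not necessarily independent), $$\mathbb{E}\Big[\max_{j<k}\vec{x}(j)\Big]-\max_{j<k}\mathbb{E}[\vec{x}(j)]\le\frac12\sum_{j<k}\sqrt{\mathrm{Var}(\vec{x}(j))}.$$ *)

theory Defs
  imports "HOL-Probability.Probability"
begin

end

theory Submission
  imports Defs
begin

lemma abs_expect_le_sqrt:
  fixes Y :: "'a \<Rightarrow> real"
  assumes "prob_space M" "integrable M Y" "integrable M (\<lambda>w. (Y w)\<^sup>2)"
  shows "(\<integral>w. \<bar>Y w\<bar> \<partial>M) \<le> sqrt (\<integral>w. (Y w)\<^sup>2 \<partial>M)"
proof -
  interpret prob_space M by fact
  have i1: "integrable M (\<lambda>w. \<bar>Y w\<bar>)" using assms by auto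
  have i2: "integrable M (\<lambda>w. (\<bar>Y w\<bar>)\<^sup>2)" using assms by simp
  have "0 \<le> variance (\<lambda>w. \<bar>Y w\<bar>)" by (rule variance_positive)
  also have "\<dots> = (\<integral>w. (Y w)\<^sup>2 \<partial>M) - (\<integral>w. \<bar>Y w\<bar> \<partial>M)\<^sup>2"
    using variance_eq[OF i1 i2] by simp
  finally have "(\<integral>w. \<bar>Y w\<bar> \<partial>M)\<^sup>2 \<le> (\<integral>w. (Y w)\<^sup>2 \<partial>M)" by simp
  then show ?thesis using real_le_rsqrt by blast
qed

theorem lemma3p5:
  fixes M :: "'a measure" and X :: "nat \<Rightarrow> 'a \<Rightarrow> real" and k :: nat
  assumes "prob_space M"
    and "k \<ge> 1"
    and "\<And>j. j < k \<Longrightarrow> X j \<in> borel_measurable M"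
    and "\<And>j. j < k \<Longrightarrow> integrable M (X j)"
    and "\<And>j. j < k \<Longrightarrow> integrable M (\<lambda>\<omega>. (X j \<omega>)\<^sup>2)"
  shows "(\<integral>\<omega>. Max ((\<lambda>j. X j \<omega>) ` {..<k}) \<partial>M)
           - Max ((\<lambda>j. prob_space.expectation M (X j)) ` {..<k})
         \<le> (1/2) * (\<Sum>j<k. sqrt (prob_space.variance M (X j)))"
proof -
  interpret prob_space M by fact
  define mu where "mu j = expectation (X j)" for j
  define m where "m = Max (mu ` {..<k})"
  have ne: "{..<k} \<noteq> {}" using assms(2) by (auto simp: lessThan_empty_iff)
  define Y where "Y j w = X j w - mu j" for j w
  have iY: "integrable M (Y j)" if "j < k" for j
    unfolding Y_def using assms(4)[OF that] by auto
  have iY2: "integrable M (\<lambda>w. (Y j w)\<^sup>2)" if "j < k" for j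
  proof -
    have "(\<lambda>w. (Y j w)\<^sup>2) = (\<lambda>w. (X j w)\<^sup>2 - 2 * mu j * X j w + (mu j)\<^sup>2)"
      unfolding Y_def by (auto simp: power2_diff)
    then show ?thesis using assms(4,5)[OF that] by auto
  qed
  have EY: "expectation (Y j) = 0" if "j < k" for j
    unfolding Y_def mu_def using assms(4)[OF that] prob_space by simp
  have varY: "variance (X j) = (\<integral>w. (Y j w)\<^sup>2 \<partial>M)" for j
    unfolding Y_def mu_def by simp
  have iP: "integrable M (\<lambda>w. max 0 (Y j w))" if "j < k" for j
    using iY[OF that] by auto
  have EP: "(\<integral>w. max 0 (Y j w) \<partial>M) = (1/2) * (\<integral>w. \<bar>Y j w\<bar> \<partial>M)" if "j < k" for j
  proof -
    have "(\<lambda>w. max 0 (Y j w)) = (\<lambda>w. (1/2) * (Y j w + \<bar>Y j w\<bar>))" by (auto simp: max_def)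
    then have "(\<integral>w. max 0 (Y j w) \<partial>M) = (1/2) * ((\<integral>w. Y j w \<partial>M) + (\<integral>w. \<bar>Y j w\<bar> \<partial>M))"
      using iY[OF that] by (simp add: Bochner_Integration.integral_add)
    then show ?thesis using EY[OF that] by simp
  qed
  have iMax: "integrable M (\<lambda>w. Max ((\<lambda>j. X j w) ` {..<k}))"
  proof (rule Bochner_Integration.integrable_bound[where f="\<lambda>w. \<Sum>j<k. \<bar>X j w\<bar>"])
    show "integrable M (\<lambda>w. \<Sum>j<k. \<bar>X j w\<bar>)" using assms(4) by auto
    show "(\<lambda>w. Max ((\<lambda>j. X j w) ` {..<k})) \<in> borel_measurable M"
      by (rule borel_measurable_Max) (auto intro: assms(3))
    show "AE w in M. norm (Max ((\<lambda>j. X j w) ` {..<k})) \<le> norm (\<Sum>j<k. \<bar>X j w\<bar>)"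
    proof (rule AE_I2)
      fix w
      obtain j where j: "j < k" "Max ((\<lambda>j. X j w) ` {..<k}) = X j w"
      proof -
        have "Max ((\<lambda>j. X j w) ` {..<k}) \<in> (\<lambda>j. X j w) ` {..<k}"
          by (rule Max_in) (use ne in auto)
        then show ?thesis using that by auto
      qed
      have "\<bar>X j w\<bar> \<le> (\<Sum>j<k. \<bar>X j w\<bar>)"
        using member_le_sum[of j "{..<k}" "\<lambda>j. \<bar>X j w\<bar>"] j by auto
      then show "norm (Max ((\<lambda>j. X j w) ` {..<k})) \<le> norm (\<Sum>j<k. \<bar>X j w\<bar>)"
        using j by (simp add: sum_nonneg)
    qed
  qed
  have pw: "Max ((\<lambda>j. X j w) ` {..<k}) \<le> m + (\<Sum>j<k. max 0 (Y j w))" for w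
  proof -
    obtain j where j: "j < k" "Max ((\<lambda>j. X j w) ` {..<k}) = X j w"
    proof -
      have "Max ((\<lambda>j. X j w) ` {..<k}) \<in> (\<lambda>j. X j w) ` {..<k}"
        by (rule Max_in) (use ne in auto)
      then show ?thesis using that by auto
    qed
    have "mu j \<le> m" unfolding m_def using j by auto
    moreover have "max 0 (Y j w) \<le> (\<Sum>j<k. max 0 (Y j w))"
      using member_le_sum[of j "{..<k}" "\<lambda>j. max 0 (Y j w)"] j by auto
    moreover have "X j w \<le> mu j + max 0 (Y j w)" unfolding Y_def by auto
    ultimately show ?thesis using j by linarith
  qed
  have "(\<integral>w. Max ((\<lambda>j. X j w) ` {..<k}) \<partial>M) \<le> (\<integral>w. m + (\<Sum>j<k. max 0 (Y j w)) \<partial>M)"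
  proof (rule integral_mono[OF iMax])
    show "integrable M (\<lambda>w. m + (\<Sum>j<k. max 0 (Y j w)))"
      by (intro Bochner_Integration.integrable_add integrable_const Bochner_Integration.integrable_sum) (use iP in auto)
  qed (use pw in auto)
  also have "\<dots> = m + (\<Sum>j<k. (\<integral>w. max 0 (Y j w) \<partial>M))"
  proof -
    have s: "(\<integral>w. (\<Sum>j<k. max 0 (Y j w)) \<partial>M) = (\<Sum>j<k. (\<integral>w. max 0 (Y j w) \<partial>M))"
      by (rule Bochner_Integration.integral_sum) (use iP in auto)
    have "(\<integral>w. m + (\<Sum>j<k. max 0 (Y j w)) \<partial>M) = (\<integral>w. m \<partial>M) + (\<integral>w. (\<Sum>j<k. max 0 (Y j w)) \<partial>M)"
      by (rule Bochner_Integration.integral_add) (use iP in auto)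
    then show ?thesis using s prob_space by simp
  qed
  also have "\<dots> = m + (\<Sum>j<k. (1/2) * (\<integral>w. \<bar>Y j w\<bar> \<partial>M))"
    by (intro arg_cong2[where f="(+)"] refl sum.cong) (use EP in auto)
  also have "\<dots> \<le> m + (\<Sum>j<k. (1/2) * sqrt (variance (X j)))"
    unfolding varY
    by (intro add_left_mono sum_mono mult_left_mono abs_expect_le_sqrt[OF assms(1)] iY iY2) auto
  finally show ?thesis unfolding m_def mu_def by (simp add: sum_distrib_left)
qed

end
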